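(* Let $\bar s$ be a positive half-integer and let $\mathcal D,\mathcal D'$ be even nonnegative integers. Let $\mathcal H^{RSOS}(\mathcal D;\mathcal D';\bar s)$ be the set of integer sequences $(a_0,a_1,\dots,a_{\mathcal D};b_0,b_1,\dots,b_{\mathcal D'})$ such that (i) $0\le a_i\le 2\bar s$ for all $i$ and $0\le b_j\le 2\bar s$ for all $j$; (ii) $\frac{a_{i+1}-a_i+2\bar s-1}{2}\in\{0,1,\dots,2\bar s-1\}$ for $0\le i\le\mathcal D-1$, and $\frac{b_{j+1}-b_j+1}{2}\in\{0,1\}$ for $0\le j\le \mathcal D'-1$; (iii) $2\bar s-2\le a_i+a_{i+1}\le 2\bar s+2$ for $0\le i\le \mathcal D-1$; (iv) $a_0=0$, $a_{\mathcal D}=b_0$ and $b_{\mathcal D'}=0$. Then the number of elements of $\mathcal H^{RSOS}(\mathcal D;\mathcal D';\bar s)$ equals $$\frac{2^{\mathcal D+\mathcal D'}}{\bar s+1}\sum_{q=1}^{2\bar s+1}\sin^2\!\Big(\frac{q\pi}{2\bar s+2}\Big)\cos^{\mathcal D+\mathcal D'}\!\Big(\frac{q\pi}{2\bar s+2}\Big),$$ with the convention $0^0=1$.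
   Context: This set describes paths of a generalized RSOS model with restriction parameter $2\bar s+2$ (heights $0,\dots,2\bar s$), whose first $\mathcal D$ steps have jump $2\bar s-1$ and last $\mathcal D'$ steps have jump $1$. *)

theory Defs
  imports Complex_Main
begin

text \<open>The half-integer \<open>s\<close> is encoded by \<open>m = 2 s\<close> (a positive natural number).\<close>

definition H_RSOS :: "nat \<Rightarrow> nat \<Rightarrow> nat \<Rightarrow> (int list \<times> int list) set" where
  "H_RSOS D D' m = {(a, b).
      length a = D + 1 \<and> length b = D' + 1 \<and>
      (\<forall>i\<le>D. 0 \<le> a ! i \<and> a ! i \<le> int m) \<and>
      (\<forall>j\<le>D'. 0 \<le> b ! j \<and> b ! j \<le> int m) \<and>
      (\<forall>i<D. \<exists>k\<in>{0..int m - 1}. a ! (i+1) - a ! i + int m - 1 = 2 * k) \<and>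
      (\<forall>j<D'. \<exists>k\<in>{0..1::int}. b ! (j+1) - b ! j + 1 = 2 * k) \<and>
      (\<forall>i<D. int m - 2 \<le> a ! i + a ! (i+1) \<and> a ! i + a ! (i+1) \<le> int m + 2) \<and>
      a ! 0 = 0 \<and> a ! D = b ! 0 \<and> b ! D' = 0}"

end

theory Submission imports Defs begin

definition paths :: "nat \<Rightarrow> (int \<Rightarrow> int \<Rightarrow> bool) \<Rightarrow> nat \<Rightarrow> int \<Rightarrow> int \<Rightarrow> int list set" where
 "paths m S N x y = {l. length l = N+1 \<and> l!0 = x \<and> l!N = y \<and> (\<forall>i\<le>N. 0 \<le> l!i \<and> l!i \<le> int m) \<and> (\<forall>i<N. S (l!i) (l!(i+1)))}"

fun cnt :: "nat \<Rightarrow> (int\<Rightarrow>int\<Rightarrow>bool) \<Rightarrow> nat \<Rightarrow> int \<Rightarrow> int \<Rightarrow> nat" where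
 "cnt m S 0 x y = (if x = y then 1 else 0)"
| "cnt m S (Suc N) x y = (if 0 \<le> y \<and> y \<le> int m then (\<Sum>z\<in>{z\<in>{0..int m}. S z y}. cnt m S N x z) else 0)"

definition SA :: "nat \<Rightarrow> int \<Rightarrow> int \<Rightarrow> bool" where
 "SA m a a' = ((\<exists>k\<in>{0..int m - 1}. a' - a + int m - 1 = 2 * k) \<and> int m - 2 \<le> a + a' \<and> a + a' \<le> int m + 2)"

definition SB :: "int \<Rightarrow> int \<Rightarrow> bool" where
 "SB a b = (\<exists>k\<in>{0..1::int}. b - a + 1 = 2*k)"

lemma paths_finite: "finite (paths m S N x y)"
proof -
  have "paths m S N x y \<subseteq> {l. set l \<subseteq> {0..int m} \<and> length l = N+1}"
    unfolding paths_def by (auto simp: in_set_conv_nth)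
  moreover have "finite {l. set l \<subseteq> {0..int m} \<and> length l = N+1}"
    by (rule finite_lists_length_eq) simp
  ultimately show ?thesis by (rule finite_subset)
qed

lemma paths_Suc:
  assumes "0 \<le> y" "y \<le> int m"
  shows "paths m S (Suc N) x y = (\<Union>z\<in>{z\<in>{0..int m}. S z y}. (\<lambda>l. l@[y]) ` paths m S N x z)"
proof (rule set_eqI, rule iffI)
  fix l assume l: "l \<in> paths m S (Suc N) x y"
  hence len: "length l = N+2" by (simp add: paths_def)
  have eq: "l = take (N+1) l @ [y]"
    using l take_Suc_conv_app_nth[of "N+1" l] len by (simp add: paths_def)
  have "take (N+1) l \<in> paths m S N x (l!N)" using l len
    by (auto simp: paths_def nth_take)
  moreover have "l!N \<in> {z\<in>{0..int m}. S z y}" using l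
    by (auto simp: paths_def)
  ultimately show "l \<in> (\<Union>z\<in>{z\<in>{0..int m}. S z y}. (\<lambda>l. l@[y]) ` paths m S N x z)"
    using eq by blast
next
  fix l assume "l \<in> (\<Union>z\<in>{z\<in>{0..int m}. S z y}. (\<lambda>l. l@[y]) ` paths m S N x z)"
  then obtain z l' where z: "z\<in>{0..int m}" "S z y" and l': "l' \<in> paths m S N x z" and l: "l = l'@[y]"
    by blast
  show "l \<in> paths m S (Suc N) x y"
    using z l' assms unfolding l paths_def
    by (auto simp: nth_append less_Suc_eq_le le_Suc_eq less_Suc_eq) (metis le_antisym not_less_eq_eq)
qed

lemma paths_out: "\<not>(0 \<le> y \<and> y \<le> int m) \<Longrightarrow> paths m S N x y = {}"
  by (auto simp: paths_def)

lemma card_paths: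
  assumes "0 \<le> x" "x \<le> int m"
  shows "card (paths m S N x y) = cnt m S N x y"
proof (induction N arbitrary: y)
  case 0
  have "paths m S 0 x y = (if x = y then {[x]} else {})"
    using assms by (auto simp: paths_def length_Suc_conv)
  then show ?case by simp
next
  case (Suc N)
  show ?case
  proof (cases "0 \<le> y \<and> y \<le> int m")
    case True
    have "card (paths m S (Suc N) x y) = (\<Sum>z\<in>{z\<in>{0..int m}. S z y}. card ((\<lambda>l. l@[y]) ` paths m S N x z))"
      unfolding paths_Suc[OF conjunct1[OF True] conjunct2[OF True]]
      apply (rule card_UN_disjoint) apply (rule finite_subset[of _ "{0..int m}"]) apply auto[2] apply (simp add: paths_finite) by (auto simp: paths_def)
    also have "\<dots> = (\<Sum>z\<in>{z\<in>{0..int m}. S z y}. cnt m S N x z)"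
      by (rule sum.cong) (auto simp: card_image inj_on_def Suc.IH)
    finally show ?thesis using True by simp
  next
    case False thus ?thesis by (auto simp: paths_out)
  qed
qed

lemma H_eq: "H_RSOS D D' m = (\<Union>c\<in>{0..int m}. paths m (SA m) D 0 c \<times> paths m SB D' c 0)"
  unfolding H_RSOS_def paths_def SA_def SB_def
  by (auto; metis order_refl)

lemma card_H: "card (H_RSOS D D' m) = (\<Sum>c\<in>{0..int m}. cnt m (SA m) D 0 c * cnt m SB D' c 0)"
proof -
  have "card (H_RSOS D D' m) = (\<Sum>c\<in>{0..int m}. card (paths m (SA m) D 0 c \<times> paths m SB D' c 0))"
    unfolding H_eq
    by (rule card_UN_disjoint) (auto simp: paths_finite, auto simp: paths_def)
  also have "\<dots> = (\<Sum>c\<in>{0..int m}. cnt m (SA m) D 0 c * cnt m SB D' c 0)"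
    by (rule sum.cong) (auto simp: card_cartesian_product card_paths)
  finally show ?thesis .
qed


lemma SB_iff: "SB a b \<longleftrightarrow> b = a - 1 \<or> b = a + 1"
proof
  assume "SB a b"
  then obtain k where "k \<in> {0..1::int}" "b - a + 1 = 2*k" unfolding SB_def by blast
  moreover hence "k = 0 \<or> k = 1" by auto
  ultimately show "b = a - 1 \<or> b = a + 1" by auto
next
  assume "b = a - 1 \<or> b = a + 1"
  thus "SB a b" unfolding SB_def by (auto intro: bexI[of _ 0] bexI[of _ 1])
qed

lemma SA_SB: "0 \<le> a \<Longrightarrow> a \<le> int m \<Longrightarrow> 0 \<le> a' \<Longrightarrow> a' \<le> int m \<Longrightarrow>
   SA m a a' = SB (int m - a) a'"
  unfolding SB_iff
proof -
  assume h: "0 \<le> a" "a \<le> int m" "0 \<le> a'" "a' \<le> int m"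
  show "SA m a a' = (a' = int m - a - 1 \<or> a' = int m - a + 1)"
  proof
    assume "SA m a a'"
    then obtain k where k: "a' - a + int m - 1 = 2 * k" "int m - 2 \<le> a + a'" "a + a' \<le> int m + 2"
      unfolding SA_def by auto
    thus "a' = int m - a - 1 \<or> a' = int m - a + 1" by presburger
  next
    assume "a' = int m - a - 1 \<or> a' = int m - a + 1"
    thus "SA m a a'"
    proof
      assume e: "a' = int m - a - 1"
      show ?thesis unfolding SA_def using h e by (intro conjI bexI[of _ "int m - a - 1"]) auto
    next
      assume e: "a' = int m - a + 1"
      show ?thesis unfolding SA_def using h e by (intro conjI bexI[of _ "int m - a"]) auto
    qed
  qed
qed

lemma cnt_out: "0 \<le> x \<Longrightarrow> x \<le> int m \<Longrightarrow> \<not>(0 \<le> y \<and> y \<le> int m) \<Longrightarrow> cnt m S N x y = 0"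
  by (cases N) auto

lemma ZB_img: "(\<lambda>z. int m - z) ` {z\<in>{0..int m}. SB z y} = {z\<in>{0..int m}. SB z (int m - y)}"
proof (rule set_eqI, rule iffI)
  fix z assume "z \<in> (\<lambda>z. int m - z) ` {z\<in>{0..int m}. SB z y}"
  thus "z \<in> {z\<in>{0..int m}. SB z (int m - y)}" unfolding SB_iff by auto
next
  fix z assume z: "z \<in> {z\<in>{0..int m}. SB z (int m - y)}"
  have "int m - z \<in> {z\<in>{0..int m}. SB z y}" using z unfolding SB_iff by auto
  moreover have "z = int m - (int m - z)" by simp
  ultimately show "z \<in> (\<lambda>z. int m - z) ` {z\<in>{0..int m}. SB z y}" by blast
qed


lemma cntB_sym: "0 \<le> x \<Longrightarrow> x \<le> int m \<Longrightarrow> cnt m SB N (int m - x) (int m - y) = cnt m SB N x y"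
proof (induction N arbitrary: y)
  case 0 thus ?case by auto
next
  case (Suc N)
  show ?case
  proof (cases "0 \<le> y \<and> y \<le> int m")
    case True
    have "cnt m SB (Suc N) (int m - x) (int m - y) = (\<Sum>z\<in>{z\<in>{0..int m}. SB z (int m - y)}. cnt m SB N (int m - x) z)"
      using True by simp
    also have "\<dots> = (\<Sum>z\<in>(\<lambda>z. int m - z) ` {z\<in>{0..int m}. SB z y}. cnt m SB N (int m - x) z)"
      by (simp only: ZB_img)
    also have "\<dots> = (\<Sum>z\<in>{z\<in>{0..int m}. SB z y}. cnt m SB N (int m - x) (int m - z))"
      by (subst sum.reindex) (auto simp: inj_on_def)
    also have "\<dots> = (\<Sum>z\<in>{z\<in>{0..int m}. SB z y}. cnt m SB N x z)"
      using Suc by simp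
    finally show ?thesis using True by simp
  next
    case False thus ?thesis by auto
  qed
qed

lemma ZA_img: "0 \<le> y \<Longrightarrow> y \<le> int m \<Longrightarrow>
  {z\<in>{0..int m}. SA m z y} = (\<lambda>z. int m - z) ` {z\<in>{0..int m}. SB z y}"
proof (rule set_eqI, rule iffI)
  fix z assume y: "0 \<le> y" "y \<le> int m" and z: "z \<in> {z\<in>{0..int m}. SA m z y}"
  hence "int m - z \<in> {z\<in>{0..int m}. SB z y}" using SA_SB[of z m y] by auto
  moreover have "z = int m - (int m - z)" by simp
  ultimately show "z \<in> (\<lambda>z. int m - z) ` {z\<in>{0..int m}. SB z y}" by blast
next
  fix z assume y: "0 \<le> y" "y \<le> int m" and "z \<in> (\<lambda>z. int m - z) ` {z\<in>{0..int m}. SB z y}"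
  then obtain w where w: "w \<in> {0..int m}" "SB w y" "z = int m - w" by blast
  thus "z \<in> {z\<in>{0..int m}. SA m z y}" using SA_SB[of z m y] y by auto
qed

lemma cntA_B: "0 \<le> x \<Longrightarrow> x \<le> int m \<Longrightarrow>
  cnt m (SA m) N x y = cnt m SB N (if even N then x else int m - x) y"
proof (induction N arbitrary: y)
  case 0 thus ?case by auto
next
  case (Suc N)
  define w where "w = (if even N then x else int m - x)"
  have w: "0 \<le> w" "w \<le> int m" using Suc.prems by (auto simp: w_def)
  have w2: "(if even (Suc N) then x else int m - x) = int m - w" by (auto simp: w_def)
  show ?case
  proof (cases "0 \<le> y \<and> y \<le> int m")
    case True
    have "cnt m (SA m) (Suc N) x y = (\<Sum>z\<in>{z\<in>{0..int m}. SA m z y}. cnt m SB N w z)"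
      using True Suc by (simp add: w_def)
    also have "\<dots> = (\<Sum>z\<in>(\<lambda>z. int m - z) ` {z\<in>{0..int m}. SB z y}. cnt m SB N w z)"
      using True by (simp only: ZA_img)
    also have "\<dots> = (\<Sum>z\<in>{z\<in>{0..int m}. SB z y}. cnt m SB N w (int m - z))"
      by (subst sum.reindex) (auto simp: inj_on_def)
    also have "\<dots> = (\<Sum>z\<in>{z\<in>{0..int m}. SB z y}. cnt m SB N (int m - w) z)"
      using cntB_sym[of "int m - w" m N] w by simp
    finally show ?thesis using True w2 by simp
  next
    case False thus ?thesis by auto
  qed
qed

lemma CK: "0 \<le> x \<Longrightarrow> x \<le> int m \<Longrightarrow> 0 \<le> y \<Longrightarrow> y \<le> int m \<Longrightarrow>
  (\<Sum>c\<in>{0..int m}. cnt m S D x c * cnt m S D' c y) = cnt m S (D+D') x y"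
proof (induction D' arbitrary: y)
  case 0
  have "(\<Sum>c\<in>{0..int m}. cnt m S D x c * cnt m S 0 c y) = (\<Sum>c\<in>{0..int m}. if c = y then cnt m S D x c else 0)"
    by (rule sum.cong) auto
  also have "\<dots> = cnt m S D x y" using 0 by (simp add: sum.delta)
  finally show ?case by simp
next
  case (Suc D')
  have "(\<Sum>c\<in>{0..int m}. cnt m S D x c * cnt m S (Suc D') c y)
      = (\<Sum>c\<in>{0..int m}. \<Sum>z\<in>{z\<in>{0..int m}. S z y}. cnt m S D x c * cnt m S D' c z)"
    using Suc.prems by (simp add: sum_distrib_left)
  also have "\<dots> = (\<Sum>z\<in>{z\<in>{0..int m}. S z y}. \<Sum>c\<in>{0..int m}. cnt m S D x c * cnt m S D' c z)"
    by (rule sum.swap)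
  also have "\<dots> = (\<Sum>z\<in>{z\<in>{0..int m}. S z y}. cnt m S (D+D') x z)"
    by (rule sum.cong) (use Suc in auto)
  finally show ?case using Suc.prems by simp
qed

lemma card_H_B: "even D \<Longrightarrow> card (H_RSOS D D' m) = cnt m SB (D+D') 0 0"
  by (simp add: card_H cntA_B CK)


lemma tel: "(\<Sum>q=1..n. 2*sin x*cos(2*real q*x)) = sin((2*real n+1)*x) - sin x"
proof (induction n)
  case 0 thus ?case by simp
next
  case (Suc n)
  have e: "2*sin x*cos(2*real (Suc n)*x) = sin((2*real (Suc n)+1)*x) - sin((2*real n+1)*x)"
  proof -
    have a: "(2*real (Suc n)+1)*x = 2*real (Suc n)*x + x" by (simp add: algebra_simps)
    have b: "(2*real n+1)*x = 2*real (Suc n)*x - x" by (simp add: algebra_simps)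
    show ?thesis unfolding a b sin_add sin_diff by simp
  qed
  show ?case using Suc e by simp
qed

lemma alg1: "2*(q::real)*(k*pi/(2*d)) = q*k*pi/d" by (simp add: field_simps)
lemma alg2: "(d::real) \<noteq> 0 \<Longrightarrow> q*pi/d - (j+1)*(q*pi/d) = -(q*j*pi/d)" by (simp add: field_simps)
lemma alg3: "(d::real) \<noteq> 0 \<Longrightarrow> q*pi/d + (j+1)*(q*pi/d) = q*(j+2)*pi/d" by (simp add: field_simps)

lemma cossum:
  fixes k m :: nat
  assumes "0 < k" "k < 2*(m+2)"
  shows "(\<Sum>q=1..m+1. cos (real q * real k * pi / (real m + 2))) = (if even k then -1 else 0)"
proof -
  define x where "x = real k * pi / (2*(real m + 2))"
  have xpos: "sin x > 0" unfolding x_def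
  proof (rule sin_gt_zero)
    show "0 < real k * pi / (2 * (real m + 2))" using assms by simp
    have "real k < real (2*(m+2))" using assms(2) by (simp only: of_nat_less_iff)
    hence "real k < 2*(real m + 2)" by simp
    hence "real k * pi < 2*(real m + 2) * pi" by simp
    thus "real k * pi / (2 * (real m + 2)) < pi" by (simp add: divide_less_eq mult.commute)
  qed
  have c: "\<And>q. cos (real q * real k * pi / (real m + 2)) = cos(2*real q*x)"
    unfolding x_def by (simp only: alg1)
  have "2*sin x * (\<Sum>q=1..m+1. cos (real q * real k * pi / (real m + 2)))
      = (\<Sum>q=1..m+1. 2*sin x*cos(2*real q*x))"
    unfolding c by (simp only: sum_distrib_left)
  also have "\<dots> = sin((2*real (m+1)+1)*x) - sin x" by (rule tel)
  also have "(2*real (m+1)+1)*x = real k * pi - x" unfolding x_def by (simp add: field_simps)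
  also have "sin (real k * pi - x) = - ((-1)^k) * sin x" by (simp add: sin_diff)
  finally have "2*sin x * (\<Sum>q=1..m+1. cos (real q * real k * pi / (real m + 2))) = - ((-1)^k + 1) * sin x"
    by (simp add: algebra_simps)
  hence "sin x * (2 * (\<Sum>q=1..m+1. cos (real q * real k * pi / (real m + 2)))) = sin x * (- ((-1)^k + 1))"
    by (simp only: mult.assoc mult.commute mult.left_commute)
  hence "2 * (\<Sum>q=1..m+1. cos (real q * real k * pi / (real m + 2))) = - ((-1)^k + 1)"
    using xpos by (subst (asm) mult_left_cancel) auto
  hence "(\<Sum>q=1..m+1. cos (real q * real k * pi / (real m + 2))) = - ((-1)^k + 1) / 2"
    by simp
  thus ?thesis by auto
qed

lemma ortho:
  fixes j m :: nat
  assumes "j \<le> m"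
  shows "(\<Sum>q=1..m+1. sin (real q * pi / (real m + 2)) * sin (real (j+1) * (real q * pi / (real m + 2))))
     = (if j = 0 then (real m + 2)/2 else 0)"
proof -
  have e: "\<And>q. sin (real q * pi / (real m + 2)) * sin (real (j+1) * (real q * pi / (real m + 2)))
     = (cos (real q * real j * pi / (real m + 2)) - cos (real q * real (j+2) * pi / (real m + 2)))/2"
  proof -
    fix q
    have mz: "real m + 2 \<noteq> 0" by (simp add: add_nonneg_eq_0_iff)
    have a: "real q * pi / (real m + 2) - real (j+1) * (real q * pi / (real m + 2)) = - (real q * real j * pi / (real m + 2))"
      unfolding of_nat_add of_nat_1 by (rule alg2[OF mz])
    have b: "real q * pi / (real m + 2) + real (j+1) * (real q * pi / (real m + 2)) = real q * real (j+2) * pi / (real m + 2)"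
      unfolding of_nat_add of_nat_1 of_nat_numeral by (rule alg3[OF mz])
    show "?thesis q" unfolding sin_times_sin a b by simp
  qed
  have "(\<Sum>q=1..m+1. sin (real q * pi / (real m + 2)) * sin (real (j+1) * (real q * pi / (real m + 2))))
    = ((\<Sum>q=1..m+1. cos (real q * real j * pi / (real m + 2))) - (\<Sum>q=1..m+1. cos (real q * real (j+2) * pi / (real m + 2))))/2"
    unfolding e by (subst sum_divide_distrib[symmetric], subst sum_subtractf, rule refl)
  also have "(\<Sum>q=1..m+1. cos (real q * real (j+2) * pi / (real m + 2))) = (if even j then -1 else 0)"
    using cossum[of "j+2" m] assms by simp
  also have "(\<Sum>q=1..m+1. cos (real q * real j * pi / (real m + 2))) = (if j = 0 then real m + 1 else if even j then -1 else 0)"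
    using cossum[of j m] assms by auto
  finally show ?thesis by auto
qed


definition F :: "nat \<Rightarrow> nat \<Rightarrow> int \<Rightarrow> real" where
  "F m N y = 2/(real m + 2) * (\<Sum>q=1..m+1. sin (real q * pi / (real m + 2)) *
      sin (of_int (y+1) * (real q * pi / (real m + 2))) * (2*cos (real q * pi / (real m + 2)))^N)"

lemma sin_rec: "sin (of_int y * (c::real)) + sin (of_int (y+2) * c) = 2 * sin (of_int (y+1) * c) * cos c"
proof -
  have a: "of_int y * c = of_int (y+1) * c - c" by (simp add: algebra_simps)
  have b: "of_int (y+2) * c = of_int (y+1) * c + c" by (simp add: algebra_simps)
  show ?thesis unfolding a b sin_add sin_diff by simp
qed

lemma alg4: "(A::real) + B = 2*C*co \<Longrightarrow> s*C*(2*co)^Suc N = s*A*(2*co)^N + s*B*(2*co)^N"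
proof -
  assume h: "A + B = 2*C*co"
  have "s*A*(2*co)^N + s*B*(2*co)^N = s*(2*co)^N*(A+B)" by (simp add: algebra_simps)
  also have "\<dots> = s*C*(2*co)^Suc N" unfolding h by (simp add: algebra_simps)
  finally show ?thesis by simp
qed

lemma F_step: "F m (Suc N) y = F m N (y-1) + F m N (y+1)"
proof -
  have "\<And>q. sin (real q * pi / (real m + 2)) *
      sin (of_int (y+1) * (real q * pi / (real m + 2))) * (2*cos (real q * pi / (real m + 2)))^(Suc N)
    = sin (real q * pi / (real m + 2)) *
      sin (of_int (y-1+1) * (real q * pi / (real m + 2))) * (2*cos (real q * pi / (real m + 2)))^N
    + sin (real q * pi / (real m + 2)) *
      sin (of_int (y+1+1) * (real q * pi / (real m + 2))) * (2*cos (real q * pi / (real m + 2)))^N"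
  proof -
    fix q
    have "sin (of_int (y-1+1) * (real q * pi / (real m + 2))) + sin (of_int (y+1+1) * (real q * pi / (real m + 2)))
      = 2 * sin (of_int (y+1) * (real q * pi / (real m + 2))) * cos (real q * pi / (real m + 2))"
      using sin_rec[of y "real q * pi / (real m + 2)"] by (simp add: add.assoc)
    thus "?thesis q" by (rule alg4)
  qed
  thus ?thesis unfolding F_def by (simp add: sum.distrib algebra_simps)
qed

lemma F_m1: "F m N (-1) = 0" by (simp add: F_def)

lemma F_top: "F m N (int m + 1) = 0"
proof -
  have mz: "real m + 2 \<noteq> 0" by (simp add: add_nonneg_eq_0_iff)
  have "\<And>q. of_int (int m + 1 + 1) * (real q * pi / (real m + 2)) = real q * pi"
    using mz by (simp add: field_simps)
  thus ?thesis by (simp add: F_def)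
qed

lemma cntB_rec: "0 \<le> y \<Longrightarrow> y \<le> int m \<Longrightarrow>
  cnt m SB (Suc N) 0 y = cnt m SB N 0 (y-1) + cnt m SB N 0 (y+1)"
proof -
  assume y: "0 \<le> y" "y \<le> int m"
  have s: "{z\<in>{0..int m}. SB z y} = {y-1,y+1} \<inter> {0..int m}" by (auto simp: SB_iff)
  have "(\<Sum>z\<in>{y-1,y+1} \<inter> {0..int m}. cnt m SB N 0 z) = (\<Sum>z\<in>{y-1,y+1}. cnt m SB N 0 z)"
  proof (rule sum.mono_neutral_left)
    have c1: "y - 1 < 0 \<Longrightarrow> cnt m SB N 0 (y-1) = 0" by (rule cnt_out) auto
    have c2: "y + 1 > int m \<Longrightarrow> cnt m SB N 0 (y+1) = 0" by (rule cnt_out) auto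
    show "\<forall>i\<in>{y - 1, y + 1} - {y - 1, y + 1} \<inter> {0..int m}. cnt m SB N 0 i = 0"
    proof
      fix i assume i: "i \<in> {y - 1, y + 1} - {y - 1, y + 1} \<inter> {0..int m}"
      hence "(i = y - 1 \<and> y - 1 < 0) \<or> (i = y + 1 \<and> y + 1 > int m)" using y by auto
      thus "cnt m SB N 0 i = 0" using c1 c2 by auto
    qed
  qed auto
  also have "\<dots> = cnt m SB N 0 (y-1) + cnt m SB N 0 (y+1)" by simp
  finally show ?thesis using y s by simp
qed

lemma spectral: "\<forall>y\<in>{-1..int m+1}. real (cnt m SB N 0 y) = F m N y"
proof (induction N)
  case 0
  show ?case
  proof
    fix y :: int assume y: "y \<in> {-1..int m+1}"
    show "real (cnt m SB 0 0 y) = F m 0 y"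
    proof (cases "y = -1 \<or> y = int m + 1")
      case True thus ?thesis using F_m1 F_top by auto
    next
      case False
      hence y2: "0 \<le> y" "y \<le> int m" using y by auto
      define j where "j = nat y"
      have j: "y = int j" "j \<le> m" using y2 by (auto simp: j_def)
      have "F m 0 y = 2/(real m + 2) * (\<Sum>q=1..m+1. sin (real q * pi / (real m + 2)) * sin (real (j+1) * (real q * pi / (real m + 2))))"
      proof -
        have e: "(of_int (y+1)::real) = real (j+1)" using j by simp
        show ?thesis unfolding F_def e by simp
      qed
      also have "\<dots> = (if j = 0 then 1 else 0)" using ortho[OF j(2)]
        by (simp add: add_nonneg_eq_0_iff)
      finally show ?thesis using j by simp
    qed
  qed
next
  case (Suc N)
  show ?case
  proof
    fix y :: int assume y: "y \<in> {-1..int m+1}"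
    show "real (cnt m SB (Suc N) 0 y) = F m (Suc N) y"
    proof (cases "y = -1 \<or> y = int m + 1")
      case True thus ?thesis using F_m1 F_top by auto
    next
      case False
      hence y2: "0 \<le> y" "y \<le> int m" using y by auto
      have "real (cnt m SB (Suc N) 0 y) = real (cnt m SB N 0 (y-1)) + real (cnt m SB N 0 (y+1))"
        using cntB_rec[OF y2] by simp
      also have "\<dots> = F m N (y-1) + F m N (y+1)" using Suc y2 by auto
      finally show ?thesis by (simp add: F_step)
    qed
  qed
qed

theorem proposition6p1:
  fixes m D D' :: nat
  assumes "m \<ge> 1" and "even D" and "even D'"
  shows "real (card (H_RSOS D D' m)) =
    2 ^ (D + D') / (real m / 2 + 1) *
    (\<Sum>q=1..m+1. (sin (real q * pi / (real m + 2)))\<^sup>2 *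
                  (cos (real q * pi / (real m + 2))) ^ (D + D'))"
proof -
  have "real (card (H_RSOS D D' m)) = F m (D+D') 0"
    using card_H_B[OF assms(2)] spectral[of m "D+D'"] by simp
  also have "\<dots> = 2 ^ (D + D') / (real m / 2 + 1) *
    (\<Sum>q=1..m+1. (sin (real q * pi / (real m + 2)))\<^sup>2 *
                  (cos (real q * pi / (real m + 2))) ^ (D + D'))"
  proof -
    have "F m (D+D') 0 = 2/(real m + 2) * (\<Sum>q=1..m+1. 2^(D+D') * ((sin (real q * pi / (real m + 2)))\<^sup>2 *
                  (cos (real q * pi / (real m + 2))) ^ (D + D')))"
      unfolding F_def by (simp add: power_mult_distrib power2_eq_square mult_ac)
    also have "\<dots> = 2/(real m + 2) * 2^(D+D') * (\<Sum>q=1..m+1. (sin (real q * pi / (real m + 2)))\<^sup>2 *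
                  (cos (real q * pi / (real m + 2))) ^ (D + D'))"
      by (simp add: sum_distrib_left[symmetric])
    also have "2/(real m + 2) * 2^(D+D') = 2 ^ (D + D') / (real m / 2 + 1)"
      by (simp add: field_simps)
    finally show ?thesis .
  qed
  finally show ?thesis .
qed

end
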